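(* Let $0\le\pi_1\le\pi_2\le1$ and, for $k=1,2$, let $X^k_1,X^k_2,\dots$ be independent Bernoulli$(\pi_k)$ random variables, and $S^k_t=\sum_{j=1}^tX^k_j$. Let $(l_t)_{t\in\mathbb{N}}$ and $(u_t)_{t\in\mathbb{N}}$ be arbitrary integer sequences and, for $k=1,2$, let $\tau_k=\infty$ if $l_t<S^k_t<u_t$ for all $t\in\mathbb{N}$, and $\tau_k=\min\{j: S^k_j\le l_j\text{ or }S^k_j\ge u_j\}$ otherwise. If $t\in\mathbb{N}$ is such that $\mathbb{P}[\tau_k>t]>0$ for $k=1,2$, then the conditional law of $S^1_t$ given $\tau_1>t$ is stochastically smaller than the conditional law of $S^2_t$ given $\tau_2>t$, i.e. $\mathbb{P}(S^1_t\le x\mid\tau_1>t)\ge\mathbb{P}(S^2_t\le x\mid\tau_2>t)$ for all $x\in\mathbb{R}$.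
   Context: $\mathbb{N}=\{1,2,\dots\}$. *)

theory Defs
  imports "HOL-Probability.Probability"
begin

definition partial_sum :: "(nat \<Rightarrow> 'a \<Rightarrow> bool) \<Rightarrow> nat \<Rightarrow> 'a \<Rightarrow> int" where
  "partial_sum X t \<omega> = (\<Sum>j=1..t. of_bool (X j \<omega>))"

definition exit_time :: "(nat \<Rightarrow> int) \<Rightarrow> (nat \<Rightarrow> int) \<Rightarrow> (nat \<Rightarrow> 'a \<Rightarrow> int) \<Rightarrow> 'a \<Rightarrow> enat" where
  "exit_time l u S \<omega> =
     (if \<forall>t\<ge>1. l t < S t \<omega> \<and> S t \<omega> < u t then \<infinity>
      else enat (LEAST j. j \<ge> 1 \<and> (S j \<omega> \<le> l j \<or> S j \<omega> \<ge> u j)))"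

end

theory Submission
  imports Defs
begin

definition vecX :: "(nat \<Rightarrow> 'a \<Rightarrow> bool) \<Rightarrow> nat \<Rightarrow> 'a \<Rightarrow> (nat \<Rightarrow> bool)" where
  "vecX X t \<omega> = restrict (\<lambda>j. X j \<omega>) {1..t}"
definition qw :: "real \<Rightarrow> nat \<Rightarrow> (nat \<Rightarrow> bool) \<Rightarrow> real" where
  "qw p t w = (\<Prod>j\<in>{1..t}. if w j then p else 1 - p)"
definition Wt :: "nat \<Rightarrow> (nat \<Rightarrow> bool) set" where
  "Wt t = PiE {1..t} (\<lambda>_. UNIV)"

lemma finite_Wt: "finite (Wt t)" unfolding Wt_def by (intro finite_PiE) auto

lemma (in prob_space) prob_vec:
  assumes indep: "indep_vars (\<lambda>_. count_space UNIV) X {1..}"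
    and dist: "\<And>j. j \<ge> 1 \<Longrightarrow> distr M (count_space UNIV) (X j) = measure_pmf (bernoulli_pmf p)"
    and p: "0 \<le> p" "p \<le> 1" and t: "t \<ge> 1"
  shows "prob {\<omega> \<in> space M. P (vecX X t \<omega>)} = (\<Sum>w\<in>{w\<in>Wt t. P w}. qw p t w)"
proof -
  have meas: "X j \<in> measurable M (count_space UNIV)" if "j \<ge> 1" for j
    using indep that unfolding indep_vars_def by auto
  have single: "prob (X j -` {b} \<inter> space M) = (if b then p else 1 - p)" if j: "j \<ge> 1" for j b
  proof -
    have "prob (X j -` {b} \<inter> space M) = measure (distr M (count_space UNIV) (X j)) {b}"
      using meas[OF j] by (simp add: measure_distr)
    also have "\<dots> = measure_pmf.prob (bernoulli_pmf p) {b}" using dist[OF j] by simp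
    also have "\<dots> = (if b then p else 1 - p)" using p by (simp add: measure_pmf_single)
    finally show ?thesis .
  qed
  have eqI: "{\<omega>\<in>space M. vecX X t \<omega> = w} = (\<Inter>j\<in>{1..t}. X j -` {w j} \<inter> space M)"
    if w: "w \<in> Wt t" for w
  proof (intro equalityI subsetI)
    fix \<omega> assume "\<omega> \<in> {\<omega>\<in>space M. vecX X t \<omega> = w}"
    then show "\<omega> \<in> (\<Inter>j\<in>{1..t}. X j -` {w j} \<inter> space M)"
      using t by (auto simp: vecX_def)
  next
    fix \<omega> assume a: "\<omega> \<in> (\<Inter>j\<in>{1..t}. X j -` {w j} \<inter> space M)"
    then have "\<omega> \<in> space M" using t by auto
    moreover have "vecX X t \<omega> = w"
    proof
      fix j show "vecX X t \<omega> j = w j"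
        using a w by (cases "j \<in> {1..t}") (auto simp: vecX_def Wt_def PiE_def extensional_def)
    qed
    ultimately show "\<omega> \<in> {\<omega>\<in>space M. vecX X t \<omega> = w}" by simp
  qed
  have ev: "{\<omega>\<in>space M. vecX X t \<omega> = w} \<in> events" if w: "w \<in> Wt t" for w
    unfolding eqI[OF w] using t meas by (intro sets.finite_INT) (auto simp: measurable_sets)
  have pt: "prob {\<omega>\<in>space M. vecX X t \<omega> = w} = qw p t w" if w: "w \<in> Wt t" for w
  proof -
    have "prob {\<omega>\<in>space M. vecX X t \<omega> = w} = (\<Prod>j\<in>{1..t}. prob (X j -` {w j} \<inter> space M))"
      unfolding eqI[OF w] using indep_varsD[OF indep, of "{1..t}" "\<lambda>j. {w j}"] t by auto
    also have "\<dots> = qw p t w" unfolding qw_def by (intro prod.cong) (auto simp: single)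
    finally show ?thesis .
  qed
  have "{\<omega> \<in> space M. P (vecX X t \<omega>)} = (\<Union>w\<in>{w\<in>Wt t. P w}. {\<omega>\<in>space M. vecX X t \<omega> = w})"
    by (auto simp: vecX_def Wt_def)
  then have "prob {\<omega> \<in> space M. P (vecX X t \<omega>)} = (\<Sum>w\<in>{w\<in>Wt t. P w}. prob {\<omega>\<in>space M. vecX X t \<omega> = w})"
    using finite_Wt ev by (simp only:) (intro finite_measure_finite_Union, auto simp: disjoint_family_on_def)
  also have "\<dots> = (\<Sum>w\<in>{w\<in>Wt t. P w}. qw p t w)" by (intro sum.cong) (auto simp: pt)
  finally show ?thesis .
qed


definition psum :: "(nat \<Rightarrow> bool) \<Rightarrow> nat \<Rightarrow> int" where
  "psum w s = (\<Sum>j=1..s. of_bool (w j))"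

lemma partial_sum_vec: "s \<le> t \<Longrightarrow> partial_sum X s \<omega> = psum (vecX X t \<omega>) s"
  unfolding partial_sum_def psum_def vecX_def by (intro sum.cong) auto

lemma exit_gt:
  "(exit_time l u S \<omega> > enat t) \<longleftrightarrow> (\<forall>s\<in>{1..t}. l s < S s \<omega> \<and> S s \<omega> < u s)"
proof (cases "\<forall>t\<ge>1. l t < S t \<omega> \<and> S t \<omega> < u t")
  case True
  then show ?thesis by (auto simp: exit_time_def)
next
  case False
  define L where "L = (LEAST j. j \<ge> 1 \<and> (S j \<omega> \<le> l j \<or> S j \<omega> \<ge> u j))"
  from False obtain j where j: "j \<ge> 1 \<and> (S j \<omega> \<le> l j \<or> S j \<omega> \<ge> u j)" by force
  have L1: "L \<ge> 1 \<and> (S L \<omega> \<le> l L \<or> S L \<omega> \<ge> u L)"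
    unfolding L_def by (rule LeastI[of _ j]) (use j in auto)
  have L2: "L \<le> j'" if "j' \<ge> 1 \<and> (S j' \<omega> \<le> l j' \<or> S j' \<omega> \<ge> u j')" for j'
    unfolding L_def by (rule Least_le) (use that in auto)
  have "exit_time l u S \<omega> = enat L" using False by (simp add: exit_time_def L_def)
  moreover have "t < L \<longleftrightarrow> (\<forall>s\<in>{1..t}. l s < S s \<omega> \<and> S s \<omega> < u s)"
  proof
    assume "t < L"
    then show "\<forall>s\<in>{1..t}. l s < S s \<omega> \<and> S s \<omega> < u s"
      using L2 by (meson atLeastAtMost_iff leD le_less_trans linorder_not_less)
  next
    assume a: "\<forall>s\<in>{1..t}. l s < S s \<omega> \<and> S s \<omega> < u s"
    show "t < L"
    proof (rule ccontr)
      assume "\<not> t < L"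
      then have "L \<in> {1..t}" using L1 by auto
      then show False using a L1 by force
    qed
  qed
  ultimately show ?thesis by simp
qed

lemma qw_pow:
  "qw p t w = p ^ card ({1..t} \<inter> {j. w j}) * (1 - p) ^ (t - card ({1..t} \<inter> {j. w j}))"
proof -
  have "qw p t w = (\<Prod>j\<in>{1..t} \<inter> {j. w j}. p) * (\<Prod>j\<in>{1..t} \<inter> - {j. w j}. 1 - p)"
    unfolding qw_def by (rule prod.If_cases) simp
  also have "card ({1..t} \<inter> - {j. w j}) = t - card ({1..t} \<inter> {j. w j})"
  proof -
    have "card {1..t} = card ({1..t} \<inter> {j. w j}) + card ({1..t} \<inter> - {j. w j})"
    proof -
      have e: "{1..t} = ({1..t} \<inter> {j. w j}) \<union> ({1..t} \<inter> - {j. w j})" by blast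
      have "card (({1..t} \<inter> {j. w j}) \<union> ({1..t} \<inter> - {j. w j})) = card ({1..t} \<inter> {j. w j}) + card ({1..t} \<inter> - {j. w j})" by (rule card_Un_disjoint) auto
      then show ?thesis using e by metis
    qed
    then show ?thesis by simp
  qed
  ultimately show ?thesis by simp
qed

lemma psum_card: "psum w t = int (card ({1..t} \<inter> {j. w j}))"
  unfolding psum_def by simp

lemma card_le_t: "card ({1..t} \<inter> {j. w j}) \<le> t"
  by (metis card_atLeastAtMost card_mono diff_Suc_1 finite_atLeastAtMost inf_le1)

lemma mlr:
  fixes p1 p2 :: real
  assumes "k < k'" "k' \<le> t" "0 \<le> p1" "p1 \<le> p2" "p2 \<le> 1"
  shows "p2^k*(1-p2)^(t-k) * (p1^k'*(1-p1)^(t-k')) \<le> p1^k*(1-p1)^(t-k)*(p2^k'*(1-p2)^(t-k'))"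
proof -
  obtain d where d: "k' = k + d" using assms by (metis less_imp_add_positive)
  define m where "m = t - k'"
  have tk: "t - k = m + d" using assms d m_def by simp
  define C where "C = p1^k*p2^k*(1-p1)^m*(1-p2)^m"
  have C: "C \<ge> 0" unfolding C_def using assms by simp
  have tk': "t - k' = m" by (simp add: m_def)
  have l: "p2^k*(1-p2)^(t-k) * (p1^k'*(1-p1)^(t-k')) = C * (p1*(1-p2))^d"
  proof -
    have "p2^k*(1-p2)^(t-k) * (p1^k'*(1-p1)^(t-k')) = p2^k*(1-p2)^(m+d) * (p1^(k+d)*(1-p1)^m)"
      using tk' by (simp only: tk d)
    also have "\<dots> = C * (p1*(1-p2))^d"
      unfolding C_def power_add power_mult_distrib by (simp only: mult_ac)
    finally show ?thesis .
  qed
  have r: "p1^k*(1-p1)^(t-k)*(p2^k'*(1-p2)^(t-k')) = C * (p2*(1-p1))^d"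
  proof -
    have "p1^k*(1-p1)^(t-k)*(p2^k'*(1-p2)^(t-k')) = p1^k*(1-p1)^(m+d)*(p2^(k+d)*(1-p2)^m)"
      using tk' by (simp only: tk d)
    also have "\<dots> = C * (p2*(1-p1))^d"
      unfolding C_def power_add power_mult_distrib by (simp only: mult_ac)
    finally show ?thesis .
  qed
  have "(p1*(1-p2))^d \<le> (p2*(1-p1))^d"
  proof (rule power_mono)
    show "0 \<le> p1*(1-p2)" using assms by simp
    show "p1*(1-p2) \<le> p2*(1-p1)" using assms by (simp add: algebra_simps)
  qed
  then show ?thesis unfolding l r using C by (rule mult_left_mono)
qed

lemma sum_split: "finite A \<Longrightarrow> sum f {w\<in>A. P w} = sum f {w\<in>A. P w \<and> Q w} + sum f {w\<in>A. P w \<and> \<not> Q w}"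
proof -
  assume f: "finite A"
  have e: "{w\<in>A. P w} = {w\<in>A. P w \<and> Q w} \<union> {w\<in>A. P w \<and> \<not> Q w}" by blast
  show ?thesis unfolding e by (rule sum.union_disjoint) (use f in auto)
qed

lemma final_alg:
  fixes a b c d :: real
  assumes "a \<ge> 0" "b \<ge> 0" "c \<ge> 0" "d \<ge> 0" "a + b > 0" "c + d > 0" "c * b \<le> a * d"
  shows "c / (c + d) \<le> a / (a + b)"
  using assms by (simp add: divide_simps algebra_simps)


definition survW :: "(nat \<Rightarrow> int) \<Rightarrow> (nat \<Rightarrow> int) \<Rightarrow> nat \<Rightarrow> (nat \<Rightarrow> bool) \<Rightarrow> bool" where
  "survW l u t w \<longleftrightarrow> (\<forall>s\<in>{1..t}. l s < psum w s \<and> psum w s < u s)"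
definition leW :: "real \<Rightarrow> nat \<Rightarrow> (nat \<Rightarrow> bool) \<Rightarrow> bool" where
  "leW x t w \<longleftrightarrow> real_of_int (psum w t) \<le> x"

lemma surv_vec: "(exit_time l u (partial_sum X) \<omega> > enat t) = survW l u t (vecX X t \<omega>)"
  unfolding exit_gt survW_def by (rule ball_cong[OF refl]) (auto simp: partial_sum_vec)

lemma le_vec: "(real_of_int (partial_sum X t \<omega>) \<le> x) = leW x t (vecX X t \<omega>)"
  unfolding leW_def by (simp add: partial_sum_vec[OF order_refl])

lemma qw_nonneg: "0 \<le> p \<Longrightarrow> p \<le> 1 \<Longrightarrow> 0 \<le> qw p t w"
  unfolding qw_def by (intro prod_nonneg) auto

lemma (in prob_space) den_eq:
  assumes indep: "indep_vars (\<lambda>_. count_space UNIV) X {1..}"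
    and dist: "\<And>j. j \<ge> 1 \<Longrightarrow> distr M (count_space UNIV) (X j) = measure_pmf (bernoulli_pmf p)"
    and p: "0 \<le> p" "p \<le> 1" and t: "t \<ge> 1"
  shows "\<P>(\<omega> in M. exit_time l u (partial_sum X) \<omega> > enat t)
     = (\<Sum>w\<in>{w\<in>Wt t. survW l u t w \<and> leW x t w}. qw p t w) + (\<Sum>w\<in>{w\<in>Wt t. survW l u t w \<and> \<not> leW x t w}. qw p t w)"
proof -
  have "\<P>(\<omega> in M. exit_time l u (partial_sum X) \<omega> > enat t) = prob {\<omega>\<in>space M. survW l u t (vecX X t \<omega>)}"
    by (simp add: surv_vec)
  also have "\<dots> = (\<Sum>w\<in>{w\<in>Wt t. survW l u t w}. qw p t w)"
    by (rule prob_vec[OF indep dist p t])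
  also have "\<dots> = (\<Sum>w\<in>{w\<in>Wt t. survW l u t w \<and> leW x t w}. qw p t w) + (\<Sum>w\<in>{w\<in>Wt t. survW l u t w \<and> \<not> leW x t w}. qw p t w)"
    by (rule sum_split[OF finite_Wt])
  finally show ?thesis .
qed

lemma (in prob_space) num_eq:
  assumes indep: "indep_vars (\<lambda>_. count_space UNIV) X {1..}"
    and dist: "\<And>j. j \<ge> 1 \<Longrightarrow> distr M (count_space UNIV) (X j) = measure_pmf (bernoulli_pmf p)"
    and p: "0 \<le> p" "p \<le> 1" and t: "t \<ge> 1"
  shows "\<P>(\<omega> in M. real_of_int (partial_sum X t \<omega>) \<le> x \<and> exit_time l u (partial_sum X) \<omega> > enat t)
     = (\<Sum>w\<in>{w\<in>Wt t. survW l u t w \<and> leW x t w}. qw p t w)"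
proof -
  have "\<P>(\<omega> in M. real_of_int (partial_sum X t \<omega>) \<le> x \<and> exit_time l u (partial_sum X) \<omega> > enat t)
     = prob {\<omega>\<in>space M. (\<lambda>w. survW l u t w \<and> leW x t w) (vecX X t \<omega>)}"
    by (simp add: surv_vec le_vec conj_commute)
  also have "\<dots> = (\<Sum>w\<in>{w\<in>Wt t. survW l u t w \<and> leW x t w}. qw p t w)"
    by (rule prob_vec[OF indep dist p t])
  finally show ?thesis .
qed

lemma mlr_w:
  assumes "0 \<le> p1" "p1 \<le> p2" "p2 \<le> 1" "leW x t w" "\<not> leW x t w'"
  shows "qw p2 t w * qw p1 t w' \<le> qw p1 t w * qw p2 t w'"
proof -
  define k where "k = card ({1..t} \<inter> {j. w j})"
  define k' where "k' = card ({1..t} \<inter> {j. w' j})"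
  have "k < k'" using assms(4,5) unfolding leW_def psum_card k_def k'_def by linarith
  moreover have "k' \<le> t" unfolding k'_def by (rule card_le_t)
  ultimately show ?thesis
    unfolding qw_pow k_def[symmetric] k'_def[symmetric] using mlr assms(1-3) by blast
qed

theorem lemma4:
  fixes M1 :: "'a measure" and M2 :: "'b measure"
    and X1 :: "nat \<Rightarrow> 'a \<Rightarrow> bool" and X2 :: "nat \<Rightarrow> 'b \<Rightarrow> bool"
    and \<pi>1 \<pi>2 :: real and l u :: "nat \<Rightarrow> int" and t :: nat
  assumes "0 \<le> \<pi>1" "\<pi>1 \<le> \<pi>2" "\<pi>2 \<le> 1"
    and "prob_space M1" "prob_space M2"
    and "prob_space.indep_vars M1 (\<lambda>_. count_space UNIV) X1 {1..}"
    and "prob_space.indep_vars M2 (\<lambda>_. count_space UNIV) X2 {1..}"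
    and "\<And>j. j \<ge> 1 \<Longrightarrow> distr M1 (count_space UNIV) (X1 j) = measure_pmf (bernoulli_pmf \<pi>1)"
    and "\<And>j. j \<ge> 1 \<Longrightarrow> distr M2 (count_space UNIV) (X2 j) = measure_pmf (bernoulli_pmf \<pi>2)"
    and "t \<ge> 1"
    and "\<P>(\<omega> in M1. exit_time l u (partial_sum X1) \<omega> > enat t) > 0"
    and "\<P>(\<omega> in M2. exit_time l u (partial_sum X2) \<omega> > enat t) > 0"
  shows "\<forall>x::real.
           \<P>(\<omega> in M1. real_of_int (partial_sum X1 t \<omega>) \<le> x \<bar> exit_time l u (partial_sum X1) \<omega> > enat t)
         \<ge> \<P>(\<omega> in M2. real_of_int (partial_sum X2 t \<omega>) \<le> x \<bar> exit_time l u (partial_sum X2) \<omega> > enat t)"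
proof
  fix x :: real
  have p1: "0 \<le> \<pi>1" "\<pi>1 \<le> 1" and p2: "0 \<le> \<pi>2" "\<pi>2 \<le> 1" using assms(1-3) by auto
  define A where "A = {w\<in>Wt t. survW l u t w \<and> leW x t w}"
  define B where "B = {w\<in>Wt t. survW l u t w \<and> \<not> leW x t w}"
  define a where "a = (\<Sum>w\<in>A. qw \<pi>1 t w)"
  define b where "b = (\<Sum>w\<in>B. qw \<pi>1 t w)"
  define c where "c = (\<Sum>w\<in>A. qw \<pi>2 t w)"
  define d where "d = (\<Sum>w\<in>B. qw \<pi>2 t w)"
  have den1: "\<P>(\<omega> in M1. exit_time l u (partial_sum X1) \<omega> > enat t) = a + b"
    unfolding a_def b_def A_def B_def
    by (rule prob_space.den_eq[OF assms(4) assms(6) assms(8) p1 assms(10)])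
  have den2: "\<P>(\<omega> in M2. exit_time l u (partial_sum X2) \<omega> > enat t) = c + d"
    unfolding c_def d_def A_def B_def
    by (rule prob_space.den_eq[OF assms(5) assms(7) assms(9) p2 assms(10)])
  have num1: "\<P>(\<omega> in M1. real_of_int (partial_sum X1 t \<omega>) \<le> x \<and> exit_time l u (partial_sum X1) \<omega> > enat t) = a"
    unfolding a_def A_def
    by (rule prob_space.num_eq[OF assms(4) assms(6) assms(8) p1 assms(10)])
  have num2: "\<P>(\<omega> in M2. real_of_int (partial_sum X2 t \<omega>) \<le> x \<and> exit_time l u (partial_sum X2) \<omega> > enat t) = c"
    unfolding c_def A_def
    by (rule prob_space.num_eq[OF assms(5) assms(7) assms(9) p2 assms(10)])
  have nn: "a \<ge> 0" "b \<ge> 0" "c \<ge> 0" "d \<ge> 0"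
    unfolding a_def b_def c_def d_def using p1 p2 by (auto intro!: sum_nonneg qw_nonneg)
  have "c * b = (\<Sum>w\<in>A. \<Sum>w'\<in>B. qw \<pi>2 t w * qw \<pi>1 t w')"
    unfolding c_def b_def by (rule sum_product)
  also have "\<dots> \<le> (\<Sum>w\<in>A. \<Sum>w'\<in>B. qw \<pi>1 t w * qw \<pi>2 t w')"
    by (intro sum_mono mlr_w[OF assms(1-3)]) (auto simp: A_def B_def)
  also have "\<dots> = a * d"
    unfolding a_def d_def by (rule sum_product[symmetric])
  finally have cb: "c * b \<le> a * d" .
  have "c / (c + d) \<le> a / (a + b)"
    using assms(11,12) den1 den2 nn cb by (intro final_alg) auto
  then show "\<P>(\<omega> in M1. real_of_int (partial_sum X1 t \<omega>) \<le> x \<bar> exit_time l u (partial_sum X1) \<omega> > enat t)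
         \<ge> \<P>(\<omega> in M2. real_of_int (partial_sum X2 t \<omega>) \<le> x \<bar> exit_time l u (partial_sum X2) \<omega> > enat t)"
    unfolding cond_prob_def num1 num2 den1 den2 by simp
qed

end
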